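(* Let $\kappa_0,\kappa_{-1},\kappa_2,\kappa_3>0$ and $j\in\mathbb N$. Consider the continuous-time Markov chain on $\mathbb N_0$ of the mass-action reaction network $\varnothing\rightleftharpoons S$ (rates $\kappa_0$, $\kappa_{-1}$), $3S\to2S$ (rate $\kappa_3$), $2S\to(2+j)S$ (rate $\kappa_2$), i.e. with transitions $x\to x+1$ at rate $\kappa_0$, $x\to x-1$ at rate $\kappa_{-1}x+\kappa_3x(x-1)(x-2)$, and $x\to x+j$ at rate $\kappa_2x(x-1)$ (when $j=1$ the last two upward rates add). Then every stationary distribution $\pi$ of this chain satisfies $\pi\in\mathcal P^{1+}_{1/j}\cap\mathcal P^{1-}_{1}$.
   Context: A stationary distribution is a probability measure $\pi$ on $\mathbb N_0$ satisfying the master equation $0=\sum_{\omega}\lambda_\omega(x-\omega)\pi(x-\omega)-\sum_\omega\lambda_\omega(x)\pi(x)$ for all $x$, where $\lambda_\omega(x)$ is the rate of $x\to x+\omega$ (zero at negative arguments). $T_\pi(x)=\sum_{y\ge x}\pi(y)$. For non-negative $f,g$, $f\lesssim g$ (equivalently $g\gtrsim f$) means there are $C,N>0$ with $f(x)\le Cg(x)$ for all $x\ge N$; $\exp(-h(x)(1+o(1)))$ means $\exp(-h(x)(1+\epsilon(x)))$ for some $\epsilon(x)\to0$. $\mathcal P^{1+}_a$ ($a>0$) is the set of probability distributions $\pi$ with $T_\pi(x)\lesssim\exp(-ax\log x(1+o(1)))$, and $\mathcal P^{1-}_a$ those with $T_\pi(x)\gtrsim\exp(-ax\log x(1+o(1)))$.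 *)

theory Defs
  imports Complex_Main
begin

text \<open>Transition rates of the mass-action chain on the states 0,1,2,...
  (arguments as integers so that rates at negative arguments are zero).
  crn_rate k0 km1 k2 k3 j w y is the rate of y to y + w.  When j = 1 the two
  upward rates add.\<close>
definition crn_rate :: "real \<Rightarrow> real \<Rightarrow> real \<Rightarrow> real \<Rightarrow> nat \<Rightarrow> int \<Rightarrow> int \<Rightarrow> real" where
  "crn_rate k0 km1 k2 k3 j w y =
     (if y < 0 then 0 else
        (if w = 1 then k0 else 0)
      + (if w = -1 then km1 * of_int y + k3 * of_int y * of_int (y - 1) * of_int (y - 2) else 0)
      + (if w = int j then k2 * of_int y * of_int (y - 1) else 0))"

definition crn_jumps :: "nat \<Rightarrow> int set" where
  "crn_jumps j = {1, -1, int j}"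

definition ext0 :: "(nat \<Rightarrow> real) \<Rightarrow> int \<Rightarrow> real" where
  "ext0 p y = (if y < 0 then 0 else p (nat y))"

definition prob_dist :: "(nat \<Rightarrow> real) \<Rightarrow> bool" where
  "prob_dist p \<longleftrightarrow> (\<forall>x. 0 \<le> p x) \<and> p sums 1"

definition stationary ::
  "(int \<Rightarrow> int \<Rightarrow> real) \<Rightarrow> int set \<Rightarrow> (nat \<Rightarrow> real) \<Rightarrow> bool" where
  "stationary lam Om p \<longleftrightarrow> prob_dist p \<and>
     (\<forall>x::nat. (\<Sum>w\<in>Om. lam w (int x - w) * ext0 p (int x - w))
              - (\<Sum>w\<in>Om. lam w (int x)) * p x = 0)"

definition tailT :: "(nat \<Rightarrow> real) \<Rightarrow> nat \<Rightarrow> real" where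
  "tailT p x = (\<Sum>k. p (x + k))"

definition lesssim :: "(nat \<Rightarrow> real) \<Rightarrow> (nat \<Rightarrow> real) \<Rightarrow> bool" where
  "lesssim f g \<longleftrightarrow> (\<exists>C>0. \<exists>N>0. \<forall>x::nat. real x \<ge> N \<longrightarrow> f x \<le> C * g x)"

definition P1plus :: "real \<Rightarrow> (nat \<Rightarrow> real) \<Rightarrow> bool" where
  "P1plus a p \<longleftrightarrow> prob_dist p \<and>
     (\<exists>eps :: nat \<Rightarrow> real. eps \<longlonglongrightarrow> 0 \<and>
        lesssim (tailT p) (\<lambda>x. exp (- (a * real x * ln (real x) * (1 + eps x)))))"

definition P1minus :: "real \<Rightarrow> (nat \<Rightarrow> real) \<Rightarrow> bool" where
  "P1minus a p \<longleftrightarrow> prob_dist p \<and>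
     (\<exists>eps :: nat \<Rightarrow> real. eps \<longlonglongrightarrow> 0 \<and>
        lesssim (\<lambda>x. exp (- (a * real x * ln (real x) * (1 + eps x)))) (tailT p))"

end

theory Submission
  imports Defs "HOL-Real_Asymp.Real_Asymp"
begin



locale crn =
  fixes k0 km1 k2 k3 :: real and j :: nat and p :: "nat \<Rightarrow> real"
  assumes k0: "k0 > 0" and km1: "km1 > 0" and k2: "k2 > 0" and k3: "k3 > 0" and j: "j \<ge> 1"
    and st: "stationary (crn_rate k0 km1 k2 k3 j) (crn_jumps j) p"
begin

definition Rm :: "int \<Rightarrow> real" where
  "Rm z = km1 * of_int z + k3 * of_int z * of_int (z-1) * of_int (z-2)"
definition Rj :: "int \<Rightarrow> real" where
  "Rj z = k2 * of_int z * of_int (z - 1)"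
abbreviation e where "e \<equiv> ext0 p"
definition h where "h z = Rj z * e z"

lemma pd: "prob_dist p" using st by (simp add: stationary_def)
lemma p_nonneg: "0 \<le> p x" using pd by (simp add: prob_dist_def)
lemma p_sums: "p sums 1" using pd by (simp add: prob_dist_def)
lemma p_summable: "summable p" using p_sums by (simp add: sums_summable)
lemma e_nonneg: "0 \<le> e z" by (simp add: ext0_def p_nonneg)
lemma e_neg: "z < 0 \<Longrightarrow> e z = 0" by (simp add: ext0_def)
lemma e_nat[simp]: "e (int x) = p x" by (simp add: ext0_def)

lemma rate_e: "crn_rate k0 km1 k2 k3 j w y * e y =
   (if w = 1 then k0 * e y else 0) + (if w = -1 then Rm y * e y else 0)
   + (if w = int j then Rj y * e y else 0)"
  by (cases "y<0") (auto simp: crn_rate_def Rm_def Rj_def ext0_def algebra_simps)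

lemma sum_rate: "(\<Sum>w\<in>crn_jumps j. crn_rate k0 km1 k2 k3 j w (g w) * e (g w))
   = k0 * e (g 1) + Rm (g (-1)) * e (g (-1)) + Rj (g (int j)) * e (g (int j))"
proof -
  have fin: "finite (crn_jumps j)" by (simp add: crn_jumps_def)
  have "(\<Sum>w\<in>crn_jumps j. crn_rate k0 km1 k2 k3 j w (g w) * e (g w))
     = (\<Sum>w\<in>crn_jumps j. (if w = 1 then k0 * e (g w) else 0) + (if w = -1 then Rm (g w) * e (g w) else 0)
   + (if w = int j then Rj (g w) * e (g w) else 0))" by (simp add: rate_e)
  also have "\<dots> = k0 * e (g 1) + Rm (g (-1)) * e (g (-1)) + Rj (g (int j)) * e (g (int j))"
    by (simp add: sum.distrib fin sum.delta, simp add: crn_jumps_def)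
  finally show ?thesis .
qed

lemma master: "k0 * e (int x - 1) + Rm (int x + 1) * e (int x + 1) + Rj (int x - int j) * e (int x - int j)
   - (k0 + Rm (int x) + Rj (int x)) * p x = 0"
proof -
  from st have m: "(\<Sum>w\<in>crn_jumps j. crn_rate k0 km1 k2 k3 j w (int x - w) * ext0 p (int x - w))
              - (\<Sum>w\<in>crn_jumps j. crn_rate k0 km1 k2 k3 j w (int x)) * p x = 0"
    by (simp add: stationary_def)
  have s2: "(\<Sum>w\<in>crn_jumps j. crn_rate k0 km1 k2 k3 j w (int x)) * p x
     = (\<Sum>w\<in>crn_jumps j. crn_rate k0 km1 k2 k3 j w ((\<lambda>w. int x) w) * e ((\<lambda>w. int x) w))"
    by (simp add: sum_distrib_right)
  show ?thesis using m unfolding s2 sum_rate[of "\<lambda>w. int x - w"] sum_rate[of "\<lambda>w. int x"]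
    by (simp add: algebra_simps)
qed

lemma h_nonneg: "0 \<le> h z"
proof (cases "z < 0")
  case True thus ?thesis by (simp add: h_def e_neg)
next
  case False
  hence "0 \<le> z * (z - 1)" by (cases "z = 0") auto
  hence "0 \<le> (of_int (z * (z-1)) :: real)" by (simp only: of_int_0_le_iff)
  hence "0 \<le> (of_int z * of_int (z-1) :: real)" by (simp only: of_int_mult)
  hence "0 \<le> k2 * (of_int z * of_int (z-1))" using k2 by simp
  hence "0 \<le> (k2 * (of_int z * of_int (z-1))) * e z" using e_nonneg by simp
  thus ?thesis unfolding h_def Rj_def by (metis mult.assoc)
qed

lemma tele: "(\<Sum>i<n. h (x - int i)) - (\<Sum>i<n. h (x - 1 - int i)) = h x - h (x - int n)"
proof (induction n)
  case 0 thus ?case by simp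
next
  case (Suc n)
  have "x - 1 - int n = x - int (Suc n)" by simp
  with Suc show ?case by (simp add: algebra_simps)
qed

definition Phi where "Phi x = Rm (x+1) * e (x+1) - k0 * e x - (\<Sum>i<j. h (x - int i))"

lemma Phi0: "Phi (int n - 1) = 0"
proof (induction n)
  case 0
  have "Rm 0 = 0" by (simp add: Rm_def)
  moreover have "h (-1 - int i) = 0" for i by (simp add: h_def e_neg)
  ultimately show ?case by (simp add: Phi_def e_neg)
next
  case (Suc n)
  have "Phi (int n) - Phi (int n - 1) = 0"
    using master[of n] tele[where n=j and x="int n"]
    by (simp add: Phi_def h_def algebra_simps)
  with Suc show ?case by simp
qed

lemma cut: "Rm (int x + 1) * p (x+1) = k0 * p x + (\<Sum>i<j. h (int x - int i))"
proof -
  have "Phi (int (Suc x) - 1) = 0" by (rule Phi0)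
  hence "Phi (int x) = 0" by simp
  moreover have "e (int x + 1) = p (x+1)" using e_nat[of "x+1"] by (simp add: add.commute)
  ultimately show ?thesis by (simp add: Phi_def)
qed

end


context crn begin

lemma Rm_nat: "Rm (int x + 1) = km1 * (real x + 1) + k3 * (real x + 1) * real x * (real x - 1)"
  by (simp add: Rm_def algebra_simps)
lemma Rj_nat: "Rj (int x) = k2 * real x * (real x - 1)"
  by (simp add: Rj_def)

lemma xx1_nonneg: "0 \<le> real x * (real x - 1)"
  by (cases x) auto

lemma Rm_pos: "Rm (int x + 1) > 0"
proof -
  have "0 \<le> k3 * (real x + 1) * (real x * (real x - 1))"
    using k3 xx1_nonneg by simp
  moreover have "0 < km1 * (real x + 1)" using km1 by simp
  ultimately show ?thesis unfolding Rm_nat by (simp add: mult.assoc)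
qed

lemma Rj_bounds: "0 \<le> Rj (int n) \<and> Rj (int n) \<le> k2 * real n ^ 2"
proof -
  have "0 \<le> k2 * (real n * (real n - 1))" using k2 xx1_nonneg by simp
  moreover have "k2 * (real n * (real n - 1)) \<le> k2 * real n ^ 2"
    using k2 by (simp add: power2_eq_square algebra_simps)
  ultimately show ?thesis unfolding Rj_nat by (simp add: mult.assoc)
qed

lemma low_k0: "k0 * p x \<le> Rm (int x + 1) * p (x+1)"
  unfolding cut using sum_nonneg[of "{..<j}" "\<lambda>i. h (int x - int i)"] h_nonneg by simp

lemma low_j: "Rj (int x) * p x \<le> Rm (int x + 1) * p (x+1)"
proof -
  have "h (int x - int 0) \<le> (\<Sum>i<j. h (int x - int i))"
    by (rule member_le_sum) (use j h_nonneg in auto)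
  hence "Rj (int x) * p x \<le> (\<Sum>i<j. h (int x - int i))" by (simp add: h_def)
  moreover have "0 \<le> k0 * p x" using k0 p_nonneg by simp
  ultimately show ?thesis unfolding cut by simp
qed

lemma p_pos_step: "p x > 0 \<Longrightarrow> p (Suc x) > 0"
proof -
  assume "p x > 0"
  hence "0 < k0 * p x" using k0 by simp
  hence "0 < Rm (int x + 1) * p (x+1)" using low_k0[of x] by linarith
  thus ?thesis using Rm_pos[of x] p_nonneg[of "Suc x"] by (simp add: zero_less_mult_iff)
qed

lemma exists_pos: "\<exists>m\<ge>2. p m > 0"
proof -
  have "\<exists>m. p m \<noteq> 0"
  proof (rule ccontr)
    assume "\<not> ?thesis"
    hence "p = (\<lambda>_. 0)" by auto
    hence "p sums 0" by simp
    with p_sums show False using sums_unique2 by fastforce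
  qed
  then obtain m0 where "p m0 \<noteq> 0" by blast
  hence m0: "p m0 > 0" using p_nonneg[of m0] by simp
  have "p (m0 + k) > 0" for k
    by (induction k) (use m0 p_pos_step in auto)
  hence "p (m0 + 2) > 0" by blast
  thus ?thesis by (intro exI[of _ "m0+2"]) auto
qed

definition cc where "cc = k2 / (km1 + k2 + k3)"

lemma cc_pos: "0 < cc" and cc_le1: "cc \<le> 1"
  using k2 km1 k3 by (auto simp: cc_def)

lemma low_step:
  assumes x: "x \<ge> 2"
  shows "cc / (real x + 1) * p x \<le> p (x+1)"
proof -
  define a where "a = real x"
  have a2: "a \<ge> 2" using x by (simp add: a_def)
  define S where "S = km1 + k2 + k3"
  have S: "S > 0" using k2 km1 k3 by (simp add: S_def)
  have q: "a * (a - 1) \<ge> 2" using mult_mono[of 2 a 1 "a - 1"] a2 by simp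
  have "k2 * (a * (a - 1)) * p x \<le> (km1 * (a + 1) + k3 * (a + 1) * a * (a - 1)) * p (x+1)"
    using low_j[of x] unfolding Rj_nat Rm_nat a_def by (simp add: mult.assoc)
  also have "\<dots> \<le> (S * (a + 1) * (a * (a - 1))) * p (x+1)"
  proof (rule mult_right_mono)
    show "0 \<le> p (x+1)" by (rule p_nonneg)
    have "km1 * (a + 1) \<le> km1 * (a + 1) * (a * (a - 1))" using km1 q a2 by simp
    moreover have "k3 * (a + 1) * a * (a - 1) = k3 * (a + 1) * (a * (a - 1))" by simp
    moreover have "0 \<le> k2 * (a + 1) * (a * (a - 1))" using k2 q a2 by simp
    ultimately show "km1 * (a + 1) + k3 * (a + 1) * a * (a - 1) \<le> S * (a + 1) * (a * (a - 1))"
      unfolding S_def by (simp add: algebra_simps)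
  qed
  finally have "(a * (a - 1)) * (k2 * p x) \<le> (a * (a - 1)) * (S * (a + 1) * p (x+1))"
    by (simp add: algebra_simps)
  hence "k2 * p x \<le> S * (a + 1) * p (x+1)" using q by (simp add: mult_le_cancel_left)
  hence "k2 * p x / (S * (a + 1)) \<le> p (x+1)" using S a2
    by (simp add: divide_le_eq mult.commute)
  thus ?thesis unfolding cc_def S_def[symmetric] a_def[symmetric] by (simp add: field_simps)
qed

lemma low_bound:
  assumes m: "m \<ge> 2" and xm: "m \<le> x"
  shows "p m * (cc / real x) ^ x \<le> p x"
  using xm
proof (induction x rule: dec_induct)
  case base
  have "(cc / real m) ^ m \<le> 1" using cc_pos cc_le1 m
    by (intro power_le_one) (auto simp: divide_le_eq)
  thus ?case using p_nonneg[of m] by (simp add: mult_left_le)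
next
  case (step x)
  have x2: "x \<ge> 2" using step m by simp
  have "(cc / (real x + 1)) ^ x \<le> (cc / real x) ^ x"
    using cc_pos x2 by (intro power_mono) (auto simp: frac_le)
  hence "p m * (cc / (real x + 1)) ^ x \<le> p m * (cc / real x) ^ x"
    using p_nonneg by (simp add: mult_left_mono)
  also have "\<dots> \<le> p x" by (rule step.IH)
  finally have "cc / (real x + 1) * (p m * (cc / (real x + 1)) ^ x) \<le> cc / (real x + 1) * p x"
    using cc_pos by (intro mult_left_mono) auto
  also have "\<dots> \<le> p (x+1)" using low_step x2 by simp
  finally show ?case by (simp add: algebra_simps)
qed

end


context crn begin

definition BB where "BB = (k0 + 2 * real j * k2) / k3"
definition LL where "LL = 1 + \<bar>ln BB\<bar>"
definition NN where "NN = nat \<lceil>exp (LL + real j * ln 2)\<rceil> + 2"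
definition KK where "KK = exp ((real NN + real j) * ln (real NN + real j))"
definition f where "f z = KK * exp (- (real z / real j) * (ln (real z) - LL))"

lemma BB_pos: "BB > 0" using k0 k2 k3 j by (simp add: BB_def add_pos_nonneg)
lemma LL_ge: "LL \<ge> 1" "ln BB + 1 \<le> LL" by (auto simp: LL_def)
lemma NN_ge: "NN \<ge> 2" by (simp add: NN_def)
lemma lnNN: "ln (real NN) \<ge> LL + real j * ln 2"
proof -
  have "exp (LL + real j * ln 2) \<le> real (nat \<lceil>exp (LL + real j * ln 2)\<rceil>)"
    by (rule real_nat_ceiling_ge)
  also have "\<dots> \<le> real NN" by (simp add: NN_def)
  finally have "exp (LL + real j * ln 2) \<le> real NN" .
  hence "ln (exp (LL + real j * ln 2)) \<le> ln (real NN)"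
    by (subst ln_le_cancel_iff) (use NN_ge in auto)
  thus ?thesis by simp
qed
lemma lnNN2: "ln (real NN) \<ge> LL"
proof -
  have "0 \<le> real j * ln 2" by simp
  thus ?thesis using lnNN by linarith
qed

lemma J: "real j \<ge> 1" using j by simp

lemma f_pos: "f z > 0" by (simp add: f_def KK_def)

lemma f_mono:
  assumes "NN \<le> z1" "z1 \<le> z2"
  shows "f z2 \<le> f z1"
proof -
  have z1: "real z1 \<ge> real NN" "real z1 > 0" using assms NN_ge by auto
  have "ln (real NN) \<le> ln (real z1)" using z1 NN_ge by simp
  hence l1: "ln (real z1) \<ge> LL" using lnNN2 by linarith
  have l2: "ln (real z1) \<le> ln (real z2)" using assms z1 by simp
  have "real z1 * (ln (real z1) - LL) \<le> real z2 * (ln (real z2) - LL)"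
    using l1 l2 assms by (intro mult_mono) auto
  hence "real z1 / real j * (ln (real z1) - LL) \<le> real z2 / real j * (ln (real z2) - LL)"
    using J by (simp add: divide_right_mono)
  thus ?thesis unfolding f_def using KK_def by simp
qed

lemma f_half:
  assumes "NN \<le> y"
  shows "f (y+1) \<le> f y / 2"
proof -
  define a where "a = real y"
  have a: "a \<ge> 2" using assms NN_ge by (simp add: a_def)
  have "ln (real NN) \<le> ln a" using assms NN_ge by (simp add: a_def)
  hence la: "ln a \<ge> LL + real j * ln 2" using lnNN by linarith
  have "a * ln a \<le> a * ln (a + 1)" using a by (intro mult_left_mono) auto
  moreover have "ln a \<le> ln (a+1)" using a by simp
  ultimately have key: "real j * ln 2 + LL \<le> (a+1) * ln (a+1) - a * ln a" using la by (simp add: algebra_simps)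
  have "- ((a+1) / real j) * (ln (a+1) - LL) \<le> - (a / real j) * (ln a - LL) - ln 2"
  proof -
    have "real j * (- ((a+1) / real j) * (ln (a+1) - LL)) = - (a+1) * (ln (a+1) - LL)"
      using J by (simp add: field_simps)
    moreover have "real j * (- (a / real j) * (ln a - LL) - ln 2) = - a * (ln a - LL) - real j * ln 2"
      using J by (simp add: field_simps)
    ultimately have "real j * (- ((a+1) / real j) * (ln (a+1) - LL)) \<le> real j * (- (a / real j) * (ln a - LL) - ln 2)"
      using key by (simp add: algebra_simps)
    thus ?thesis by (rule mult_left_le_imp_le) (use J in simp)
  qed
  hence "exp (- ((a+1) / real j) * (ln (a+1) - LL)) \<le> exp (- (a / real j) * (ln a - LL) - ln 2)" by simp
  also have "\<dots> = exp (- (a / real j) * (ln a - LL)) / 2" by (simp add: exp_diff)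
  finally show ?thesis unfolding f_def a_def using KK_def by (simp add: add.commute)
qed

lemma f_step:
  assumes "y \<ge> 1"
  shows "BB / (real y + real j) * f y \<le> f (y + j)"
proof -
  define a where "a = real y"
  define JJ where "JJ = real j"
  have a: "a \<ge> 1" using assms by (simp add: a_def)
  have JJ: "JJ \<ge> 1" using J by (simp add: JJ_def)
  have "ln (a + JJ) - ln a = ln ((a + JJ) / a)" using a JJ by (simp add: ln_div)
  also have "\<dots> \<le> (a + JJ) / a - 1" using a JJ by (intro ln_le_minus_one) auto
  also have "\<dots> = JJ / a" using a by (simp add: field_simps)
  finally have d: "a * (ln (a + JJ) - ln a) \<le> JJ" using a by (simp add: field_simps)
  have d2: "a / JJ * (ln (a + JJ) - ln a) \<le> 1"
    using d JJ by (simp add: field_simps)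
  have id: "- ((a + JJ) / JJ) * (ln (a + JJ) - LL) - (ln BB - ln (a + JJ) - a / JJ * (ln a - LL))
      = LL - ln BB - a / JJ * (ln (a + JJ) - ln a)"
    using JJ by (simp add: field_simps)
  have E: "ln BB - ln (a + JJ) + - (a / JJ) * (ln a - LL) \<le> - ((a + JJ) / JJ) * (ln (a + JJ) - LL)"
    using id d2 LL_ge(2) by linarith
  have "BB / (a + JJ) = exp (ln BB - ln (a + JJ))"
    using BB_pos a JJ by (simp add: exp_diff)
  hence "BB / (a + JJ) * exp (- (a / JJ) * (ln a - LL)) = exp (ln BB - ln (a + JJ)) * exp (- (a / JJ) * (ln a - LL))"
    by simp
  also have "\<dots> = exp (ln BB - ln (a + JJ) + - (a / JJ) * (ln a - LL))"
    by (simp only: exp_add)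
  also have "\<dots> \<le> exp (- ((a + JJ) / JJ) * (ln (a + JJ) - LL))" using E by (simp only: exp_le_cancel_iff)
  finally have "BB / (a + JJ) * exp (- (a / JJ) * (ln a - LL)) \<le> exp (- ((a + JJ) / JJ) * (ln (a + JJ) - LL))" .
  hence "KK * (BB / (a + JJ) * exp (- (a / JJ) * (ln a - LL))) \<le> KK * exp (- ((a + JJ) / JJ) * (ln (a + JJ) - LL))"
    by (rule mult_left_mono) (simp add: KK_def)
  thus ?thesis unfolding f_def a_def JJ_def by (simp add: algebra_simps)
qed

lemma f_base:
  assumes "1 \<le> z" "z < NN + j"
  shows "1 \<le> f z"
proof -
  define a where "a = real z"
  have a: "a \<ge> 1" "a \<le> real NN + real j" using assms by (auto simp: a_def)
  have la: "0 \<le> ln a" using a by simp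
  have "a / real j * (ln a - LL) \<le> a / real j * ln a"
    using a LL_ge J by (intro mult_left_mono) auto
  also have "\<dots> \<le> a * ln a" using a J la
    by (intro mult_right_mono) (auto simp: divide_le_eq)
  also have "\<dots> \<le> (real NN + real j) * ln (real NN + real j)"
    using a la by (intro mult_mono) auto
  finally have "- ((real NN + real j) * ln (real NN + real j)) \<le> - (a / real j * (ln a - LL))" by simp
  hence "exp (- ((real NN + real j) * ln (real NN + real j))) \<le> exp (- (a / real j) * (ln a - LL))"
    by simp
  hence "KK * exp (- ((real NN + real j) * ln (real NN + real j))) \<le> KK * exp (- (a / real j) * (ln a - LL))"
    by (simp add: KK_def)
  moreover have "KK * exp (- ((real NN + real j) * ln (real NN + real j))) = 1"
    by (simp add: KK_def exp_minus)
  ultimately show ?thesis unfolding f_def a_def by simp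
qed

lemma p_le1: "p z \<le> 1"
proof -
  have "sum p {z} \<le> suminf p"
    by (rule sum_le_suminf) (auto simp: p_summable p_nonneg)
  thus ?thesis using p_sums sums_unique by fastforce
qed

lemma up_step:
  assumes x: "x \<ge> 2" and M: "0 \<le> M" and W: "\<forall>i<j. e (int x - int i) \<le> M"
  shows "p (x+1) \<le> BB / (real x + 1) * M"
proof -
  define a where "a = real x"
  have a2: "a \<ge> 2" using x by (simp add: a_def)
  have q: "a * (a - 1) \<ge> 2" using mult_mono[of 2 a 1 "a - 1"] a2 by simp
  have px: "p x \<le> M" using W j by (metis e_nat diff_zero of_nat_0 less_le_trans zero_less_one)
  have hb: "h (int x - int i) \<le> k2 * a ^ 2 * M" if "i < j" for i
  proof (cases "i \<le> x")
    case True
    have eq: "int x - int i = int (x - i)" using True by simp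
    have "h (int x - int i) = Rj (int (x - i)) * e (int x - int i)" by (simp add: h_def eq)
    also have "\<dots> \<le> Rj (int (x - i)) * M"
      using W that Rj_bounds[of "x-i"] by (intro mult_left_mono) auto
    also have "\<dots> \<le> k2 * real (x - i) ^ 2 * M" using Rj_bounds[of "x-i"] M by (intro mult_right_mono) auto
    also have "\<dots> \<le> k2 * a ^ 2 * M" using k2 M True
      by (intro mult_right_mono mult_left_mono power_mono) (auto simp: a_def)
    finally show ?thesis .
  next
    case False
    hence "int x - int i < 0" by simp
    hence "h (int x - int i) = 0" by (simp add: h_def e_neg)
    thus ?thesis using k2 M by simp
  qed
  have "(\<Sum>i<j. h (int x - int i)) \<le> (\<Sum>i<j. k2 * a ^ 2 * M)"
    by (rule sum_mono) (use hb in auto)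
  hence s: "(\<Sum>i<j. h (int x - int i)) \<le> real j * k2 * a ^ 2 * M" by simp
  have "k3 * (a + 1) * a * (a - 1) * p (x+1) \<le> Rm (int x + 1) * p (x+1)"
    unfolding Rm_nat a_def using km1 p_nonneg[of "x+1"] by (simp add: algebra_simps)
  also have "\<dots> \<le> k0 * M + real j * k2 * a ^ 2 * M"
    unfolding cut using add_mono[OF mult_left_mono[OF px, of k0] s] k0 by simp
  also have "\<dots> \<le> (k0 + 2 * real j * k2) * (a * (a - 1)) * M"
  proof -
    have "k0 \<le> k0 * (a * (a - 1))" using k0 q by simp
    moreover have "real j * k2 * a ^ 2 \<le> 2 * real j * k2 * (a * (a - 1))"
    proof -
      have "a ^ 2 \<le> 2 * (a * (a - 1))" using a2 by (simp add: power2_eq_square algebra_simps)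
      hence "real j * k2 * a ^ 2 \<le> real j * k2 * (2 * (a * (a - 1)))"
        using k2 J by (intro mult_left_mono) auto
      thus ?thesis by (simp add: algebra_simps)
    qed
    ultimately have "k0 + real j * k2 * a ^ 2 \<le> (k0 + 2 * real j * k2) * (a * (a - 1))"
      by (simp add: algebra_simps)
    thus ?thesis using M by (simp add: distrib_right[symmetric] mult_right_mono)
  qed
  finally have "(a * (a - 1)) * (k3 * (a + 1) * p (x+1)) \<le> (a * (a - 1)) * ((k0 + 2 * real j * k2) * M)"
    by (simp add: algebra_simps)
  hence "k3 * (a + 1) * p (x+1) \<le> (k0 + 2 * real j * k2) * M" using q by (simp add: mult_le_cancel_left)
  moreover have "p (x+1) * (k3 * (a + 1)) = k3 * (a + 1) * p (x+1)" by (rule mult.commute)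
  ultimately have H2: "p (x+1) * (k3 * (a + 1)) \<le> (k0 + 2 * real j * k2) * M" by linarith
  have pos: "0 < k3 * (a + 1)" using k3 a2 by simp
  have "p (x+1) \<le> (k0 + 2 * real j * k2) * M / (k3 * (a + 1))"
    using pos_le_divide_eq[OF pos] H2 by blast
  also have "\<dots> = BB / (real x + 1) * M" by (simp add: BB_def a_def)
  finally show ?thesis .
qed

end


context crn begin

lemma up_bound: "NN \<le> z \<Longrightarrow> p z \<le> f z"
proof (induction z rule: less_induct)
  case (less z)
  show ?case
  proof (cases "z < NN + j")
    case True
    have "1 \<le> z" using less.prems NN_ge by simp
    thus ?thesis using p_le1[of z] f_base[of z] True by linarith
  next
    case False
    define x where "x = z - 1"
    have zx: "z = x + 1" and xge: "x + 1 \<ge> NN + j" using False NN_ge by (auto simp: x_def)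
    define y where "y = x + 1 - j"
    have y: "NN \<le> y" "y + j = z" using xge zx by (auto simp: y_def)
    have W: "\<forall>i<j. e (int x - int i) \<le> f y"
    proof (intro allI impI)
      fix i assume i: "i < j"
      have eq: "int x - int i = int (x - i)" using i xge NN_ge by simp
      have "e (int x - int i) = p (x - i)" by (simp add: eq)
      also have "\<dots> \<le> f (x - i)" using less.IH[of "x - i"] i xge zx by simp
      also have "\<dots> \<le> f y" using y i xge by (intro f_mono) (auto simp: y_def)
      finally show "e (int x - int i) \<le> f y" .
    qed
    have x2: "x \<ge> 2" using xge NN_ge j by simp
    have "p (x+1) \<le> BB / (real x + 1) * f y"
      using up_step[OF x2 _ W] f_pos[of y] by simp
    also have "real x + 1 = real y + real j" using y zx by simp
    also have "BB / (real y + real j) * f y \<le> f (y + j)" using y NN_ge by (intro f_step) auto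
    finally show ?thesis using y zx by simp
  qed
qed

lemma p_summ_shift: "summable (\<lambda>k. p (x + k))"
  using summable_ignore_initial_segment[OF p_summable, of x] by (simp add: add.commute)

lemma tail_le:
  assumes "NN \<le> x"
  shows "tailT p x \<le> 2 * f x"
proof -
  have fk: "f (x + k) \<le> f x * (1/2) ^ k" for k
  proof (induction k)
    case 0 thus ?case by simp
  next
    case (Suc k)
    have "f (x + Suc k) \<le> f (x + k) / 2" using f_half[of "x + k"] assms by simp
    also have "\<dots> \<le> f x * (1/2) ^ k / 2" using Suc by simp
    finally show ?case by simp
  qed
  have le: "p (x + k) \<le> f x * (1/2) ^ k" for k
    using up_bound[of "x+k"] assms fk[of k] by simp
  have sg: "summable (\<lambda>k. f x * (1/2::real) ^ k)" by (intro summable_mult) simp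
  have "tailT p x \<le> (\<Sum>k. f x * (1/2::real) ^ k)"
    unfolding tailT_def by (rule suminf_le) (use le p_summ_shift sg in auto)
  also have "\<dots> = f x * 2" by (simp add: suminf_mult suminf_geometric)
  finally show ?thesis by simp
qed

lemma tail_ge: "p x \<le> tailT p x"
proof -
  have "sum (\<lambda>k. p (x + k)) {0} \<le> (\<Sum>k. p (x + k))"
    by (rule sum_le_suminf) (auto simp: p_summ_shift p_nonneg)
  thus ?thesis by (simp add: tailT_def)
qed

lemma P1plus_p: "P1plus (1 / real j) p"
  unfolding P1plus_def
proof (intro conjI exI[of _ "\<lambda>x. - LL / ln (real x)"])
  show "prob_dist p" by (rule pd)
  show "(\<lambda>x. - LL / ln (real x)) \<longlonglongrightarrow> 0" by real_asymp
  show "lesssim (tailT p) (\<lambda>x. exp (- (1 / real j * real x * ln (real x) * (1 + - LL / ln (real x)))))"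
  proof -
    have c1: "0 < 2 * KK" by (simp add: KK_def)
    have c2: "0 < real NN" using NN_ge by simp
    have "\<forall>x::nat. real NN \<le> real x \<longrightarrow> tailT p x \<le> 2 * KK * exp (- (1 / real j * real x * ln (real x) * (1 + - LL / ln (real x))))"
    proof (intro allI impI)
    fix x :: nat assume "real NN \<le> real x"
    hence x: "NN \<le> x" by simp
    hence lx: "ln (real x) > 0" using NN_ge by simp
    have "1 / real j * real x * ln (real x) * (1 + - LL / ln (real x)) = real x / real j * (ln (real x) - LL)"
      using lx J by (simp add: field_simps)
    hence "2 * KK * exp (- (1 / real j * real x * ln (real x) * (1 + - LL / ln (real x)))) = 2 * f x"
      by (simp add: f_def)
    thus "tailT p x \<le> 2 * KK * exp (- (1 / real j * real x * ln (real x) * (1 + - LL / ln (real x))))"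
      using tail_le[OF x] by simp
    qed
    thus ?thesis unfolding lesssim_def using c1 c2 by blast
  qed
qed

lemma P1minus_p: "P1minus 1 p"
proof -
  obtain m where m: "m \<ge> 2" "p m > 0" using exists_pos by blast
  show ?thesis
    unfolding P1minus_def
  proof (intro conjI exI[of _ "\<lambda>x. - ln cc / ln (real x)"])
    show "prob_dist p" by (rule pd)
    show "(\<lambda>x. - ln cc / ln (real x)) \<longlonglongrightarrow> 0" by real_asymp
    show "lesssim (\<lambda>x. exp (- (1 * real x * ln (real x) * (1 + - ln cc / ln (real x))))) (tailT p)"
    proof -
      have c1: "0 < 1 / p m" using m by simp
      have c2: "0 < real m" using m by simp
      have "\<forall>x::nat. real m \<le> real x \<longrightarrow> exp (- (1 * real x * ln (real x) * (1 + - ln cc / ln (real x)))) \<le> 1 / p m * tailT p x"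
      proof (intro allI impI)
      fix x :: nat assume "real m \<le> real x"
      hence x: "m \<le> x" by simp
      hence x2: "real x \<ge> 2" using m by simp
      hence lx: "ln (real x) > 0" by simp
      have "1 * real x * ln (real x) * (1 + - ln cc / ln (real x)) = - (real x * (ln cc - ln (real x)))"
        using lx by (simp add: field_simps)
      hence "exp (- (1 * real x * ln (real x) * (1 + - ln cc / ln (real x)))) = exp (real x * ln (cc / real x))"
        using cc_pos x2 by (simp add: ln_div)
      also have "\<dots> = (cc / real x) ^ x"
        using cc_pos x2 by (simp add: exp_of_nat_mult)
      also have "\<dots> \<le> p x / p m"
        using low_bound[OF m(1) x] m by (simp add: pos_le_divide_eq mult.commute)
      also have "\<dots> \<le> 1 / p m * tailT p x"
        using tail_ge[of x] m by (simp add: divide_right_mono)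
      finally show "exp (- (1 * real x * ln (real x) * (1 + - ln cc / ln (real x)))) \<le> 1 / p m * tailT p x" .
      qed
      thus ?thesis unfolding lesssim_def using c1 c2 by blast
    qed
  qed
qed

end

theorem mainTheorem11:
  fixes k0 km1 k2 k3 :: real and j :: nat and p :: "nat \<Rightarrow> real"
  assumes "k0 > 0" "km1 > 0" "k2 > 0" "k3 > 0" "j \<ge> 1"
    and "stationary (crn_rate k0 km1 k2 k3 j) (crn_jumps j) p"
  shows "P1plus (1 / real j) p \<and> P1minus 1 p"
proof -
  interpret crn k0 km1 k2 k3 j p using assms by unfold_locales auto
  show ?thesis using P1plus_p P1minus_p by blast
qed


end
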